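(* Let $\mathscr{H}$ be a complex Hilbert space and let $B,C$ be Hilbert–Schmidt operators on $\mathscr{H}$. Then $$w_{(2,e)}^2(B,C)\leq\frac12\Big(\max\{|\mathrm{tr}(B^2)|,|\mathrm{tr}(C^2)|\}+|\mathrm{tr}(BC)|+\max\{\|B\|_2^2,\|C\|_2^2\}+|\mathrm{tr}(BC^* )|\Big).$$
   Context: An operator $T$ on $\mathscr{H}$ is Hilbert–Schmidt if $\sum_i\|Te_i\|^2<\infty$ for some (equivalently every) orthonormal basis $\{e_i\}$; its Hilbert–Schmidt norm is $\|T\|_2=(\mathrm{tr}(T^*T))^{1/2}$. For an operator $T$, $\Re(T)=\frac12(T+T^* )$. The Hilbert–Schmidt Euclidean operator radius is $w_{(2,e)}(B,C)=\sup_{\lambda_1,\lambda_2\in\mathbb{C},\ |\lambda_1|^2+|\lambda_2|^2\leq1}\sup_{\theta\in\mathbb{R}}\|\Re(e^{i\theta}(\lambda_1B+\lambda_2C))\|_2$. *)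

theory Defs
  imports "HOL-Analysis.Analysis"
begin

text \<open>Complex inner product spaces and complex Hilbert spaces
  (not available in the distribution libraries). The inner product is
  linear in the second argument and conjugate-linear in the first.\<close>

class complex_inner = real_normed_vector +
  fixes scaleC :: "complex \<Rightarrow> 'a \<Rightarrow> 'a"
    and cinner :: "'a \<Rightarrow> 'a \<Rightarrow> complex"
  assumes scaleC_of_real: "scaleC (complex_of_real r) x = scaleR r x"
    and scaleC_add_right: "scaleC a (x + y) = scaleC a x + scaleC a y"
    and scaleC_add_left: "scaleC (a + b) x = scaleC a x + scaleC b x"
    and scaleC_scaleC: "scaleC a (scaleC b x) = scaleC (a * b) x"
    and scaleC_one: "scaleC 1 x = x"
    and cinner_commute: "cinner x y = cnj (cinner y x)"
    and cinner_add_right: "cinner x (y + z) = cinner x y + cinner x z"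
    and cinner_scaleC_right: "cinner x (scaleC a y) = a * cinner x y"
    and cinner_self_norm: "cinner x x = complex_of_real ((norm x)\<^sup>2)"

class chilbert_space = complex_inner + complete_space

definition bounded_clinear_op :: "('a::complex_inner \<Rightarrow> 'a) \<Rightarrow> bool" where
  "bounded_clinear_op T \<longleftrightarrow>
     (\<forall>x y. T (x + y) = T x + T y) \<and> (\<forall>c x. T (scaleC c x) = scaleC c (T x)) \<and>
     (\<exists>K. \<forall>x. norm (T x) \<le> norm x * K)"

definition adj :: "('a::complex_inner \<Rightarrow> 'a) \<Rightarrow> ('a \<Rightarrow> 'a)" where
  "adj T = (SOME S. \<forall>x y. cinner (T x) y = cinner x (S y))"

definition cspan :: "'a::complex_inner set \<Rightarrow> 'a set" where
  "cspan E = {\<Sum>e\<in>F. scaleC (c e) e | F c. finite F \<and> F \<subseteq> E}"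

definition onb :: "'a::complex_inner set \<Rightarrow> bool" where
  "onb E \<longleftrightarrow> (\<forall>e\<in>E. norm e = 1) \<and> (\<forall>e\<in>E. \<forall>f\<in>E. e \<noteq> f \<longrightarrow> cinner e f = 0)
      \<and> closure (cspan E) = UNIV"

definition hilbert_schmidt :: "('a::complex_inner \<Rightarrow> 'a) \<Rightarrow> bool" where
  "hilbert_schmidt T \<longleftrightarrow> bounded_clinear_op T \<and>
     (\<exists>E. onb E \<and> (\<lambda>e. (norm (T e))\<^sup>2) summable_on E)"

definition trace :: "('a::complex_inner \<Rightarrow> 'a) \<Rightarrow> complex" where
  "trace T = infsum (\<lambda>e. cinner e (T e)) (SOME E. onb E)"

definition hs_norm :: "('a::complex_inner \<Rightarrow> 'a) \<Rightarrow> real" where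
  "hs_norm T = sqrt (Re (trace (adj T \<circ> T)))"

definition ReOp :: "('a::complex_inner \<Rightarrow> 'a) \<Rightarrow> ('a \<Rightarrow> 'a)" where
  "ReOp T = (\<lambda>x. scaleC (1/2) (T x + adj T x))"

definition w2e :: "('a::complex_inner \<Rightarrow> 'a) \<Rightarrow> ('a \<Rightarrow> 'a) \<Rightarrow> real" where
  "w2e B C = Sup {hs_norm (ReOp (\<lambda>x. scaleC (exp (\<i> * complex_of_real \<theta>))
                      (scaleC l1 (B x) + scaleC l2 (C x))))
                 | l1 l2 \<theta>. (cmod l1)\<^sup>2 + (cmod l2)\<^sup>2 \<le> 1}"

end

theory Submission
  imports Defs
begin


context complex_inner begin

lemma scaleC_zero_right[simp]: "scaleC a 0 = 0"
  using scaleC_add_right[of a 0 0] by simp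
lemma scaleC_zero_left[simp]: "scaleC 0 x = 0"
  using scaleC_add_left[of 0 0 x] by simp
lemma scaleC_minus_right: "scaleC a (- x) = - scaleC a x"
proof -
  have "scaleC a x + scaleC a (-x) = 0" using scaleC_add_right[of a x "-x"] by simp
  from minus_unique[OF this] show ?thesis by simp
qed
lemma scaleC_diff_right: "scaleC a (x - y) = scaleC a x - scaleC a y"
  using scaleC_add_right[of a x "-y"] scaleC_minus_right by simp
lemma scaleC_minus_left: "scaleC (- a) x = - scaleC a x"
proof -
  have "scaleC a x + scaleC (-a) x = 0" using scaleC_add_left[of a "-a" x] by simp
  from minus_unique[OF this] show ?thesis by simp
qed
lemma scaleC_sum_right: "scaleC a (sum f A) = (\<Sum>i\<in>A. scaleC a (f i))"
  by (induction A rule: infinite_finite_induct) (auto simp: scaleC_add_right)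

lemma cinner_add_left: "cinner (x + y) z = cinner x z + cinner y z"
  by (metis cinner_commute cinner_add_right complex_cnj_add)
lemma cinner_scaleC_left: "cinner (scaleC a x) y = cnj a * cinner x y"
  by (metis cinner_commute cinner_scaleC_right complex_cnj_mult complex_cnj_cnj)
lemma cinner_zero_right[simp]: "cinner x 0 = 0"
  using cinner_add_right[of x 0 0] by simp
lemma cinner_zero_left[simp]: "cinner 0 x = 0"
  using cinner_add_left[of 0 0 x] by simp
lemma cinner_minus_right: "cinner x (- y) = - cinner x y"
proof -
  have "cinner x y + cinner x (-y) = 0" using cinner_add_right[of x y "-y"] by simp
  from group_add_class.minus_unique[OF this] show ?thesis by simp
qed
lemma cinner_minus_left: "cinner (- x) y = - cinner x y"
proof -
  have "cinner x y + cinner (-x) y = 0" using cinner_add_left[of x "-x" y] by simp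
  from group_add_class.minus_unique[OF this] show ?thesis by simp
qed
lemma cinner_diff_right: "cinner x (y - z) = cinner x y - cinner x z"
  using cinner_add_right[of x y "-z"] cinner_minus_right by simp
lemma cinner_diff_left: "cinner (x - y) z = cinner x z - cinner y z"
  using cinner_add_left[of x "-y" z] cinner_minus_left by simp
lemma cinner_sum_right: "cinner x (sum f A) = (\<Sum>i\<in>A. cinner x (f i))"
  by (induction A rule: infinite_finite_induct) (auto simp: cinner_add_right)
lemma cinner_sum_left: "cinner (sum f A) x = (\<Sum>i\<in>A. cinner (f i) x)"
  by (induction A rule: infinite_finite_induct) (auto simp: cinner_add_left)
lemma cinner_scaleR_right: "cinner x (scaleR r y) = complex_of_real r * cinner x y"
  by (metis cinner_scaleC_right scaleC_of_real)
lemma cinner_scaleR_left: "cinner (scaleR r x) y = complex_of_real r * cinner x y"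
  by (metis cinner_scaleC_left scaleC_of_real complex_cnj_complex_of_real)

lemma cinner_self: "cinner x x = complex_of_real ((norm x)\<^sup>2)"
  by (rule cinner_self_norm)
lemma cinner_self_eq_0: "cinner x x = 0 \<longleftrightarrow> x = 0"
  by (simp add: cinner_self)

lemma norm_sq_cinner: "(norm x)\<^sup>2 = Re (cinner x x)"
  by (simp add: cinner_self)

lemma norm_scaleC: "norm (scaleC a x) = cmod a * norm x"
proof -
  have ca: "cnj a * a = complex_of_real ((cmod a)\<^sup>2)"
    by (metis complex_norm_square of_real_power mult.commute)
  have "(norm (scaleC a x))\<^sup>2 = Re (cnj a * a * cinner x x)"
    by (metis norm_sq_cinner cinner_scaleC_left cinner_scaleC_right mult.assoc)
  also have "\<dots> = (cmod a * norm x)\<^sup>2"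
    unfolding ca cinner_self by (simp add: power_mult_distrib)
  finally show ?thesis
    by (simp add: power2_eq_iff_nonneg)
qed

lemma norm_add_sq: "(norm (x + y))\<^sup>2 = (norm x)\<^sup>2 + (norm y)\<^sup>2 + 2 * Re (cinner x y)"
proof -
  have "(norm (x + y))\<^sup>2 = Re (cinner x x + cinner x y + cinner y x + cinner y y)"
    by (simp add: norm_sq_cinner cinner_add_left cinner_add_right add.assoc)
  also have "\<dots> = (norm x)\<^sup>2 + (norm y)\<^sup>2 + 2 * Re (cinner x y)"
    by (subst cinner_commute[of y x]) (simp add: norm_sq_cinner)
  finally show ?thesis .
qed

lemma Cauchy_Schwarz: "cmod (cinner x y) \<le> norm x * norm y"
proof (cases "y = 0")
  case True then show ?thesis by simp
next
  case False
  then have ny: "norm y > 0" by simp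
  define t where "t = cinner y x / complex_of_real ((norm y)\<^sup>2)"
  have "0 \<le> (norm (x - scaleC t y))\<^sup>2" by simp
  also have "\<dots> = Re (cinner x x - t * cinner x y - cnj t * cinner y x + cnj t * t * cinner y y)"
    by (simp add: norm_sq_cinner cinner_diff_left cinner_diff_right cinner_scaleC_left
        cinner_scaleC_right algebra_simps)
  also have "\<dots> = (norm x)\<^sup>2 - (cmod (cinner x y))\<^sup>2 / (norm y)\<^sup>2"
  proof -
    have c: "cinner y x = cnj (cinner x y)" by (rule cinner_commute)
    have sq: "cinner x y * cnj (cinner x y) = complex_of_real ((cmod (cinner x y))\<^sup>2)"
      by (metis complex_norm_square of_real_power)
    have "t * cinner x y = complex_of_real ((cmod (cinner x y))\<^sup>2 / (norm y)\<^sup>2)"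
      unfolding t_def c using ny sq by (simp add: field_simps)
    moreover have "cnj t * cinner y x = complex_of_real ((cmod (cinner x y))\<^sup>2 / (norm y)\<^sup>2)"
      unfolding t_def c using ny sq by (simp add: field_simps)
    moreover have "cnj t * t * cinner y y = complex_of_real ((cmod (cinner x y))\<^sup>2 / (norm y)\<^sup>2)"
      unfolding t_def c using ny sq by (simp add: cinner_self field_simps power2_eq_square)
    ultimately show ?thesis by (simp add: cinner_self)
  qed
  finally have "(cmod (cinner x y))\<^sup>2 \<le> (norm x * norm y)\<^sup>2"
    using ny by (simp add: field_simps power_mult_distrib)
  then show ?thesis
    by (meson mult_nonneg_nonneg norm_ge_zero power2_le_imp_le)
qed

end

lemma bounded_linear_cinner_right: "bounded_linear (\<lambda>y. cinner (x::'a::complex_inner) y)"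
proof (rule bounded_linear_intro[where K="norm x"])
  show "cinner x (y + z) = cinner x y + cinner x z" for y z by (rule cinner_add_right)
  show "cinner x (scaleR r y) = scaleR r (cinner x y)" for r y
    by (simp add: cinner_scaleR_right scaleR_conv_of_real)
  show "norm (cinner x y) \<le> norm y * norm x" for y
    using Cauchy_Schwarz[of x y] by (simp add: mult.commute)
qed

lemma bounded_linear_scaleC_left: "bounded_linear (\<lambda>a. scaleC a (x::'a::complex_inner))"
proof (rule bounded_linear_intro[where K="norm x"])
  show "scaleC (a + b) x = scaleC a x + scaleC b x" for a b by (rule scaleC_add_left)
  show "scaleC (scaleR r a) x = scaleR r (scaleC a x)" for r a
    by (metis scaleC_of_real scaleC_scaleC scaleR_conv_of_real)
  show "norm (scaleC a x) \<le> norm a * norm x" for a by (simp add: norm_scaleC)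
qed



lemma cnj_mult_self: "cnj z * z = complex_of_real ((cmod z)\<^sup>2)"
  by (metis complex_norm_square of_real_power mult.commute)

lemma scaleC_diff_left: "scaleC (a - b) x = scaleC a x - scaleC b (x::'a::complex_inner)"
  by (metis diff_conv_add_uminus scaleC_add_left scaleC_minus_left)

lemma onb_ortho:
  assumes "onb E" "e \<in> E" "f \<in> E"
  shows "cinner e f = (if e = f then 1 else 0)"
  using assms unfolding onb_def by (auto simp: cinner_self)

lemma cinner_onb_sum:
  fixes E :: "'a::complex_inner set"
  assumes "onb E" "finite F" "F \<subseteq> E" "e \<in> E"
  shows "cinner e (\<Sum>f\<in>F. scaleC (c f) f) = (if e \<in> F then c e else 0)"
proof -
  have "cinner e (\<Sum>f\<in>F. scaleC (c f) f) = (\<Sum>f\<in>F. if e = f then c f else 0)"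
    unfolding cinner_sum_right cinner_scaleC_right using assms by (intro sum.cong) (auto simp: onb_ortho subset_iff)
  also have "\<dots> = (if e \<in> F then c e else 0)"
    using assms(2) by (simp add: sum.delta)
  finally show ?thesis .
qed

lemma cinner_onb_sum_left:
  fixes E :: "'a::complex_inner set"
  assumes "onb E" "finite F" "F \<subseteq> E" "e \<in> E"
  shows "cinner (\<Sum>f\<in>F. scaleC (c f) f) e = (if e \<in> F then cnj (c e) else 0)"
  using cinner_onb_sum[OF assms, of c] by (subst cinner_commute) auto

lemma norm_onb_sum:
  fixes E :: "'a::complex_inner set"
  assumes "onb E" "finite F" "F \<subseteq> E"
  shows "(norm (\<Sum>f\<in>F. scaleC (c f) f))\<^sup>2 = (\<Sum>f\<in>F. (cmod (c f))\<^sup>2)"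
proof -
  have "cinner (\<Sum>f\<in>F. scaleC (c f) f) (\<Sum>f\<in>F. scaleC (c f) f)
      = (\<Sum>g\<in>F. cnj (c g) * cinner g (\<Sum>f\<in>F. scaleC (c f) f))"
    by (simp add: cinner_sum_left cinner_scaleC_left)
  also have "\<dots> = (\<Sum>g\<in>F. complex_of_real ((cmod (c g))\<^sup>2))"
    using assms by (auto simp: cinner_onb_sum cnj_mult_self subset_iff intro!: sum.cong)
  finally show ?thesis
    by (simp add: norm_sq_cinner)
qed

lemma proj_orth:
  fixes E :: "'a::complex_inner set"
  assumes "onb E" "finite F" "F \<subseteq> E"
  shows "cinner (\<Sum>f\<in>F. scaleC (d f) f) (x - (\<Sum>f\<in>F. scaleC (cinner f x) f)) = 0"
proof -
  have "cinner g (x - (\<Sum>f\<in>F. scaleC (cinner f x) f)) = 0" if "g \<in> F" for g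
    using cinner_onb_sum[OF assms, of g "\<lambda>f. cinner f x"] that assms by (auto simp: cinner_diff_right)
  then show ?thesis
    by (simp add: cinner_sum_left cinner_scaleC_left)
qed

lemma best_approx:
  fixes E :: "'a::complex_inner set"
  assumes "onb E" "finite F" "F \<subseteq> E"
  shows "norm (x - (\<Sum>f\<in>F. scaleC (cinner f x) f)) \<le> norm (x - (\<Sum>f\<in>F. scaleC (d f) f))"
proof -
  define p where "p = (\<Sum>f\<in>F. scaleC (cinner f x) f)"
  define y where "y = (\<Sum>f\<in>F. scaleC (d f) f)"
  have py: "p - y = (\<Sum>f\<in>F. scaleC (cinner f x - d f) f)"
    unfolding p_def y_def by (simp add: sum_subtractf[symmetric] scaleC_diff_left)
  have "x - y = (x - p) + (p - y)" by simp
  then have "(norm (x - y))\<^sup>2 = (norm (x - p))\<^sup>2 + (norm (p - y))\<^sup>2 + 2 * Re (cinner (x - p) (p - y))"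
    by (metis norm_add_sq)
  moreover have "cinner (p - y) (x - p) = 0"
    by (subst py, unfold p_def, rule proj_orth[OF assms])
  then have "cinner (x - p) (p - y) = 0"
    by (metis cinner_commute complex_cnj_zero)
  ultimately have "(norm (x - p))\<^sup>2 \<le> (norm (x - y))\<^sup>2" by simp
  then show ?thesis unfolding p_def y_def
    by (simp add: power2_le_iff_abs_le)
qed

lemma onb_expansion:
  fixes E :: "'a::complex_inner set"
  assumes "onb E"
  shows "((\<lambda>e. scaleC (cinner e x) e) has_sum x) E"
  unfolding has_sum_def tendsto_iff
proof (intro allI impI)
  fix \<epsilon> :: real assume "\<epsilon> > 0"
  have "x \<in> closure (cspan E)" using assms unfolding onb_def by auto
  then obtain y where "y \<in> cspan E" "dist y x < \<epsilon>"
    using \<open>\<epsilon> > 0\<close> unfolding closure_approachable by blast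
  then obtain G c where G: "finite G" "G \<subseteq> E" "y = (\<Sum>e\<in>G. scaleC (c e) e)"
    and yx: "dist y x < \<epsilon>"
    unfolding cspan_def by blast
  show "eventually (\<lambda>F. dist (sum (\<lambda>e. scaleC (cinner e x) e) F) x < \<epsilon>) (finite_subsets_at_top E)"
    unfolding eventually_finite_subsets_at_top
  proof (intro exI[of _ G] conjI allI impI)
    fix F assume F: "finite F \<and> G \<subseteq> F \<and> F \<subseteq> E"
    have "y = (\<Sum>e\<in>F. scaleC (if e \<in> G then c e else 0) e)"
      unfolding G(3) using F by (intro sum.mono_neutral_cong_left) auto
    then have "norm (x - (\<Sum>e\<in>F. scaleC (cinner e x) e)) \<le> norm (x - y)"
      using best_approx[OF assms, of F x] F by auto
    then show "dist (sum (\<lambda>e. scaleC (cinner e x) e) F) x < \<epsilon>"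
      using yx by (simp add: dist_norm norm_minus_commute)
  qed (use G in auto)
qed

lemma parseval_polar:
  fixes E :: "'a::complex_inner set"
  assumes "onb E"
  shows "((\<lambda>f. cinner u f * cinner f v) has_sum cinner u v) E"
proof -
  have "((\<lambda>f. cinner u (scaleC (cinner f v) f)) has_sum cinner u v) E"
    by (rule has_sum_bounded_linear[OF bounded_linear_cinner_right onb_expansion[OF assms]])
  then show ?thesis by (simp add: cinner_scaleC_right mult.commute)
qed

lemma parseval:
  fixes E :: "'a::complex_inner set"
  assumes "onb E"
  shows "((\<lambda>f. (cmod (cinner f v))\<^sup>2) has_sum (norm v)\<^sup>2) E"
proof -
  have "((\<lambda>f. Re (cinner v f * cinner f v)) has_sum Re (cinner v v)) E"
    by (rule has_sum_bounded_linear[OF bounded_linear_Re parseval_polar[OF assms]])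
  moreover have "Re (cinner v f * cinner f v) = (cmod (cinner f v))\<^sup>2" for f
    by (subst cinner_commute[of v f]) (simp only: cnj_mult_self Re_complex_of_real)
  ultimately show ?thesis by (simp add: norm_sq_cinner)
qed



lemma prod_le_half_sq: "(a::real) * b \<le> (a\<^sup>2 + b\<^sup>2) / 2"
proof -
  have "0 \<le> (a - b)\<^sup>2" by simp
  then show ?thesis by (simp add: power2_diff)
qed

definition is_adj :: "('a::complex_inner \<Rightarrow> 'a) \<Rightarrow> ('a \<Rightarrow> 'a) \<Rightarrow> bool" where
  "is_adj T S \<longleftrightarrow> (\<forall>x y. cinner (T x) y = cinner x (S y))"

lemma adj_unique:
  assumes "is_adj T S"
  shows "adj T = S"
proof -
  have ex: "\<exists>S. \<forall>x y. cinner (T x) y = cinner x (S y)"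
    using assms unfolding is_adj_def by blast
  define S0 where "S0 = adj T"
  have S0: "\<forall>x y. cinner (T x) y = cinner x (S0 y)"
    unfolding S0_def adj_def by (rule someI_ex[OF ex])
  show ?thesis
  proof
    fix y
    have "cinner x (S0 y - S y) = 0" for x
      using S0 assms unfolding is_adj_def by (simp add: cinner_diff_right)
    from this[of "S0 y - S y"] show "adj T y = S y"
      unfolding S0_def[symmetric] by (simp add: cinner_self_eq_0)
  qed
qed

lemma is_adj_sym:
  assumes "is_adj T S"
  shows "is_adj S T"
  unfolding is_adj_def
proof (intro allI)
  fix x y
  have "cinner (S x) y = cnj (cinner y (S x))" by (rule cinner_commute)
  also have "\<dots> = cnj (cinner (T y) x)" using assms unfolding is_adj_def by simp
  also have "\<dots> = cinner x (T y)" by (metis cinner_commute)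
  finally show "cinner (S x) y = cinner x (T y)" .
qed

lemma sq_summable_Sigma:
  fixes E :: "'b set" and F :: "'a::complex_inner set"
  assumes "onb F" "(\<lambda>e. (norm (u e))\<^sup>2) summable_on E"
  shows "((\<lambda>(e,f). (cmod (cinner f (u e)))\<^sup>2) has_sum infsum (\<lambda>e. (norm (u e))\<^sup>2) E) (E \<times> F)"
proof -
  let ?g = "\<lambda>(e,f). (cmod (cinner f (u e)))\<^sup>2"
  have p: "((\<lambda>f. ?g (e, f)) has_sum (norm (u e))\<^sup>2) F" if "e \<in> E" for e
    using parseval[OF assms(1), of "u e"] by simp
  have s: "?g summable_on Sigma E (\<lambda>_. F)"
    by (rule summable_on_SigmaI[OF p assms(2)]) auto
  then have "(?g has_sum infsum ?g (E \<times> F)) (E \<times> F)" by simp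
  moreover have "((\<lambda>e. (norm (u e))\<^sup>2) has_sum infsum ?g (E \<times> F)) E"
    by (rule has_sum_SigmaD[OF _ p]) (use s in simp_all)
  ultimately show ?thesis
    by (metis infsumI)
qed

lemma hs_swap:
  fixes E F :: "'a::complex_inner set"
  assumes E: "onb E" and F: "onb F" and adj: "is_adj X X'"
    and sm: "(\<lambda>e. (norm (X e))\<^sup>2) summable_on E"
  shows "((\<lambda>f. (norm (X' f))\<^sup>2) has_sum infsum (\<lambda>e. (norm (X e))\<^sup>2) E) F"
proof -
  let ?g = "\<lambda>(e,f). (cmod (cinner f (X e)))\<^sup>2"
  have h: "(?g has_sum infsum (\<lambda>e. (norm (X e))\<^sup>2) E) (E \<times> F)"
    by (rule sq_summable_Sigma[OF F sm])
  then have h2: "((\<lambda>(f,e). ?g (e,f)) has_sum infsum (\<lambda>e. (norm (X e))\<^sup>2) E) (F \<times> E)"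
    by (subst (asm) has_sum_swap) simp
  have eq: "cinner f (X e) = cnj (cinner e (X' f))" for e f
  proof -
    have "cinner f (X e) = cnj (cinner (X e) f)" by (rule cinner_commute)
    then show ?thesis using adj unfolding is_adj_def by simp
  qed
  have p: "((\<lambda>e. (\<lambda>(f,e). ?g (e,f)) (f, e)) has_sum (norm (X' f))\<^sup>2) E" if "f \<in> F" for f
    using parseval[OF E, of "X' f"] by (simp add: eq)
  show ?thesis
    by (rule has_sum_SigmaD[OF _ p]) (use h2 in simp_all)
qed

lemma inner_summable:
  fixes u v :: "'b \<Rightarrow> 'a::complex_inner"
  assumes "(\<lambda>e. (norm (u e))\<^sup>2) summable_on E" "(\<lambda>e. (norm (v e))\<^sup>2) summable_on E"
  shows "(\<lambda>e. cinner (u e) (v e)) summable_on E"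
proof -
  have g: "(\<lambda>e. ((norm (u e))\<^sup>2 + (norm (v e))\<^sup>2) / 2) summable_on E"
    using summable_on_cmult_left[OF summable_on_add[OF assms], of "1/2"] by simp
  have "(\<lambda>e. norm (cinner (u e) (v e))) summable_on E"
  proof (rule Infinite_Sum.abs_summable_on_comparison_test)
    show "(\<lambda>e. norm (((norm (u e))\<^sup>2 + (norm (v e))\<^sup>2) / 2)) summable_on E"
      using g by simp
    show "norm (cinner (u e) (v e)) \<le> norm (((norm (u e))\<^sup>2 + (norm (v e))\<^sup>2) / 2)" for e
    proof -
      have "norm (cinner (u e) (v e)) \<le> norm (u e) * norm (v e)" by (rule Cauchy_Schwarz)
      also have "\<dots> \<le> ((norm (u e))\<^sup>2 + (norm (v e))\<^sup>2) / 2"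
        by (rule prod_le_half_sq)
      finally show ?thesis by simp
    qed
  qed
  then show ?thesis by (rule abs_summable_summable)
qed

lemma hs_swap_polar:
  fixes E F :: "'a::complex_inner set"
  assumes E: "onb E" and F: "onb F" and adjX: "is_adj X X'" and adjY: "is_adj Y Y'"
    and smX: "(\<lambda>e. (norm (X e))\<^sup>2) summable_on E"
    and smY: "(\<lambda>e. (norm (Y e))\<^sup>2) summable_on E"
  shows "infsum (\<lambda>e. cinner (X e) (Y e)) E = infsum (\<lambda>f. cinner (Y' f) (X' f)) F"
proof -
  define h where "h e f = cinner (X e) f * cinner f (Y e)" for e f
  let ?gX = "\<lambda>(e,f). (cmod (cinner f (X e)))\<^sup>2"
  let ?gY = "\<lambda>(e,f). (cmod (cinner f (Y e)))\<^sup>2"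
  have sX: "?gX summable_on (E \<times> F)"
    using sq_summable_Sigma[OF F smX] by (rule has_sum_imp_summable)
  have sY: "?gY summable_on (E \<times> F)"
    using sq_summable_Sigma[OF F smY] by (rule has_sum_imp_summable)
  have g: "(\<lambda>p. (?gX p + ?gY p) / 2) summable_on (E \<times> F)"
    using summable_on_cmult_left[OF summable_on_add[OF sX sY], of "1/2"] by simp
  have "(\<lambda>p. norm ((\<lambda>(e,f). h e f) p)) summable_on (E \<times> F)"
  proof (rule Infinite_Sum.abs_summable_on_comparison_test)
    show "(\<lambda>p. norm ((?gX p + ?gY p) / 2)) summable_on (E \<times> F)"
    proof -
      have "norm ((?gX p + ?gY p) / 2) = (?gX p + ?gY p) / 2" for p
        by (simp add: split_beta)
      then show ?thesis using g by simp
    qed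
    show "norm ((\<lambda>(e,f). h e f) p) \<le> norm ((?gX p + ?gY p) / 2)" for p
    proof -
      obtain e f where p: "p = (e,f)" by force
      have "norm (h e f) = cmod (cinner f (X e)) * cmod (cinner f (Y e))"
        unfolding h_def by (subst cinner_commute) (simp add: norm_mult)
      also have "\<dots> \<le> ((cmod (cinner f (X e)))\<^sup>2 + (cmod (cinner f (Y e)))\<^sup>2) / 2"
        by (rule prod_le_half_sq)
      finally show ?thesis by (simp add: p)
    qed
  qed
  then have hs: "(\<lambda>(e,f). h e f) summable_on (E \<times> F)"
    by (rule abs_summable_summable)
  have i1: "infsum (h e) F = cinner (X e) (Y e)" for e
    unfolding h_def by (rule infsumI[OF parseval_polar[OF F]])
  have i2: "infsum (\<lambda>e. h e f) E = cinner (Y' f) (X' f)" for f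
  proof -
    have "h e f = cinner (Y' f) e * cinner e (X' f)" for e
    proof -
      have 1: "cinner (X e) f = cinner e (X' f)" using adjX by (simp add: is_adj_def)
      have "cinner f (Y e) = cnj (cinner (Y e) f)" by (rule cinner_commute)
      also have "\<dots> = cnj (cinner e (Y' f))" using adjY by (simp add: is_adj_def)
      also have "\<dots> = cinner (Y' f) e" by (rule cinner_commute[symmetric])
      finally show ?thesis unfolding h_def 1 by simp
    qed
    then show ?thesis
      by (simp add: infsumI[OF parseval_polar[OF E]])
  qed
  have "infsum (\<lambda>e. infsum (h e) F) E = infsum (\<lambda>f. infsum (\<lambda>e. h e f) E) F"
    by (rule infsum_swap_banach[OF hs])
  then show ?thesis by (simp add: i1 i2)
qed



lemma bounded_linear_cinner_left: "bounded_linear (\<lambda>x. cinner x (y::'a::complex_inner))"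
proof (rule bounded_linear_intro[where K="norm y"])
  show "cinner (x + z) y = cinner x y + cinner z y" for x z by (rule cinner_add_left)
  show "cinner (scaleR r x) y = scaleR r (cinner x y)" for r x
    by (simp add: cinner_scaleR_left scaleR_conv_of_real)
  show "norm (cinner x y) \<le> norm x * norm y" for x
    using Cauchy_Schwarz[of x y] by simp
qed

lemma bounded_clinear_op_linear:
  assumes "bounded_clinear_op T"
  shows "bounded_linear T"
proof -
  from assms obtain K where add: "\<And>x y. T (x + y) = T x + T y"
    and sc: "\<And>c x. T (scaleC c x) = scaleC c (T x)" and K: "\<And>x. norm (T x) \<le> norm x * K"
    unfolding bounded_clinear_op_def by blast
  show ?thesis
  proof (rule bounded_linear_intro[where K=K])
    show "T (scaleR r x) = scaleR r (T x)" for r x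
      using sc[of "complex_of_real r" x] by (simp add: scaleC_of_real)
  qed (use add K in auto)
qed

lemma sq_summable_vec:
  fixes E :: "'a::chilbert_space set"
  assumes E: "onb E" and sm: "(\<lambda>e. (cmod (c e))\<^sup>2) summable_on E"
  shows "(\<lambda>e. scaleC (c e) e) summable_on E"
proof -
  define f where "f e = scaleC (c e) e" for e
  define L where "L = infsum (\<lambda>e. (cmod (c e))\<^sup>2) E"
  have lim: "(sum (\<lambda>e. (cmod (c e))\<^sup>2) \<longlongrightarrow> L) (finite_subsets_at_top E)"
    using sm unfolding L_def has_sum_def[symmetric] by simp
  have "\<exists>P. eventually P (finite_subsets_at_top E) \<and>
              (\<forall>F F'. P F \<and> P F' \<longrightarrow> dist (sum f F) (sum f F') < e)" if "e > 0" for e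
  proof -
    define d where "d = e\<^sup>2 / 8"
    define P where "P F \<longleftrightarrow> finite F \<and> F \<subseteq> E \<and> dist (sum (\<lambda>e. (cmod (c e))\<^sup>2) F) L < d" for F
    have "d > 0" using that by (simp add: d_def)
    have ev_P: "eventually P (finite_subsets_at_top E)"
      using lim \<open>d > 0\<close> unfolding P_def tendsto_iff
      by (auto simp: eventually_conj_iff eventually_finite_subsets_at_top_weakI)
    moreover have "dist (sum f F1) (sum f F2) < e" if "P F1" "P F2" for F1 F2
    proof -
      from ev_P obtain F' where "finite F'" "F' \<subseteq> E"
        and Psup: "\<And>F. finite F \<and> F' \<subseteq> F \<and> F \<subseteq> E \<Longrightarrow> P F"
        unfolding eventually_finite_subsets_at_top by blast
      define G where "G = F' \<union> F1 \<union> F2"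
      have G: "finite G" "G \<subseteq> E"
        using G_def P_def that \<open>finite F'\<close> \<open>F' \<subseteq> E\<close> by auto
      have PG: "P G" using Psup[of G] G G_def by blast
      have sub: "dist (sum f G) (sum f F) < sqrt (2 * d)" if "F \<subseteq> G" "P F" for F
      proof -
        have fin: "finite F" using that P_def by auto
        have "dist (sum f G) (sum f F) = norm (sum f (G - F))"
          unfolding dist_norm using G(1) that fin by (subst sum_diff) auto
        moreover have "(norm (sum f (G - F)))\<^sup>2 = (\<Sum>e\<in>G - F. (cmod (c e))\<^sup>2)"
          unfolding f_def using G by (intro norm_onb_sum[OF E]) auto
        moreover have "(\<Sum>e\<in>G - F. (cmod (c e))\<^sup>2) = (\<Sum>e\<in>G. (cmod (c e))\<^sup>2) - (\<Sum>e\<in>F. (cmod (c e))\<^sup>2)"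
          using G(1) that fin by (subst sum_diff) auto
        moreover have "\<dots> < 2 * d"
          using PG that unfolding P_def dist_real_def by linarith
        ultimately have "(dist (sum f G) (sum f F))\<^sup>2 < 2 * d" by simp
        then show ?thesis
          by (metis real_less_rsqrt zero_le_dist)
      qed
      have "dist (sum f F1) (sum f F2) \<le> dist (sum f G) (sum f F1) + dist (sum f G) (sum f F2)"
        by (rule dist_triangle3)
      also have "\<dots> < sqrt (2 * d) + sqrt (2 * d)"
        by (intro add_strict_mono sub that) (auto simp: G_def)
      also have "sqrt (2 * d) = e / 2"
        using \<open>e > 0\<close> unfolding d_def by (simp add: real_sqrt_divide power_divide)
      finally show ?thesis by simp
    qed
    ultimately show ?thesis by blast
  qed
  then have "cauchy_filter (filtermap (sum f) (finite_subsets_at_top E))"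
    by (simp add: cauchy_filter_metric_filtermap)
  moreover have "complete (UNIV::'a set)" by (rule complete_UNIV)
  ultimately obtain L' where "(sum f \<longlongrightarrow> L') (finite_subsets_at_top E)"
    using complete_uniform[where S=UNIV] by (force simp add: filterlim_def)
  then show ?thesis
    unfolding f_def summable_on_def has_sum_def by blast
qed

lemma hs_adj_exists:
  fixes B :: "'a::chilbert_space \<Rightarrow> 'a"
  assumes Bl: "bounded_clinear_op B" and E: "onb E"
    and sm: "(\<lambda>e. (norm (B e))\<^sup>2) summable_on E"
  shows "\<exists>S. is_adj B S"
proof -
  have lin: "bounded_linear B" by (rule bounded_clinear_op_linear[OF Bl])
  have sc: "B (scaleC c x) = scaleC c (B x)" for c x
    using Bl unfolding bounded_clinear_op_def by blast
  define S where "S y = infsum (\<lambda>e. scaleC (cinner (B e) y) e) E" for y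
  have "cinner (B x) y = cinner x (S y)" for x y
  proof -
    have cs: "(\<lambda>e. (cmod (cinner (B e) y))\<^sup>2) summable_on E"
    proof -
      have "(\<lambda>e. norm ((cmod (cinner (B e) y))\<^sup>2)) summable_on E"
      proof (rule Infinite_Sum.abs_summable_on_comparison_test)
        show "(\<lambda>e. norm ((norm (B e))\<^sup>2 * (norm y)\<^sup>2)) summable_on E"
          using summable_on_cmult_left[OF sm, of "(norm y)\<^sup>2"] by simp
        show "norm ((cmod (cinner (B e) y))\<^sup>2) \<le> norm ((norm (B e))\<^sup>2 * (norm y)\<^sup>2)" for e
          using Cauchy_Schwarz[of "B e" y]
          by (simp add: power_mult_distrib[symmetric] power_mono)
      qed
      then show ?thesis by simp
    qed
    have hs: "((\<lambda>e. scaleC (cinner (B e) y) e) has_sum S y) E"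
      unfolding S_def using sq_summable_vec[OF E cs] by simp
    have 1: "((\<lambda>e. cinner (B e) y * cinner x e) has_sum cinner x (S y)) E"
      using has_sum_bounded_linear[OF bounded_linear_cinner_right hs, of x]
      by (simp add: cinner_scaleC_right)
    have "((\<lambda>e. B (scaleC (cinner e x) e)) has_sum B x) E"
      by (rule has_sum_bounded_linear[OF lin onb_expansion[OF E]])
    then have "((\<lambda>e. scaleC (cinner e x) (B e)) has_sum B x) E"
      by (simp add: sc)
    from has_sum_bounded_linear[OF bounded_linear_cinner_left this, of y]
    have "((\<lambda>e. cnj (cinner e x) * cinner (B e) y) has_sum cinner (B x) y) E"
      by (simp add: cinner_scaleC_left)
    then have 2: "((\<lambda>e. cinner (B e) y * cinner x e) has_sum cinner (B x) y) E"
      by (simp add: mult.commute flip: cinner_commute)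
    show ?thesis using has_sum_unique[OF 2 1] .
  qed
  then show ?thesis unfolding is_adj_def by blast
qed



lemma comb_has_sum:
  fixes X Y :: "'b \<Rightarrow> 'a::complex_inner"
  assumes sX: "(\<lambda>e. (norm (X e))\<^sup>2) summable_on E" and sY: "(\<lambda>e. (norm (Y e))\<^sup>2) summable_on E"
  shows "((\<lambda>e. (norm (scaleC a (X e) + scaleC b (Y e)))\<^sup>2) has_sum
     ((cmod a)\<^sup>2 * infsum (\<lambda>e. (norm (X e))\<^sup>2) E + (cmod b)\<^sup>2 * infsum (\<lambda>e. (norm (Y e))\<^sup>2) E
      + 2 * Re (cnj a * b * infsum (\<lambda>e. cinner (X e) (Y e)) E))) E"
proof -
  have pw: "(norm (scaleC a (X e) + scaleC b (Y e)))\<^sup>2 =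
      (cmod a)\<^sup>2 * (norm (X e))\<^sup>2 + (cmod b)\<^sup>2 * (norm (Y e))\<^sup>2 + 2 * Re (cnj a * b * cinner (X e) (Y e))" for e
    by (simp add: norm_add_sq norm_scaleC cinner_scaleC_left cinner_scaleC_right power_mult_distrib mult.assoc)
      (simp add: algebra_simps)
  have h1: "((\<lambda>e. (cmod a)\<^sup>2 * (norm (X e))\<^sup>2) has_sum (cmod a)\<^sup>2 * infsum (\<lambda>e. (norm (X e))\<^sup>2) E) E"
    by (rule has_sum_cmult_right) (use sX in simp)
  have h2: "((\<lambda>e. (cmod b)\<^sup>2 * (norm (Y e))\<^sup>2) has_sum (cmod b)\<^sup>2 * infsum (\<lambda>e. (norm (Y e))\<^sup>2) E) E"
    by (rule has_sum_cmult_right) (use sY in simp)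
  have i: "((\<lambda>e. cinner (X e) (Y e)) has_sum infsum (\<lambda>e. cinner (X e) (Y e)) E) E"
    using inner_summable[OF sX sY] by simp
  have h3: "((\<lambda>e. 2 * Re (cnj a * b * cinner (X e) (Y e))) has_sum 2 * Re (cnj a * b * infsum (\<lambda>e. cinner (X e) (Y e)) E)) E"
    by (intro has_sum_cmult_right has_sum_Re i)
  show ?thesis
    unfolding pw by (intro has_sum_add h1 h2 h3)
qed

lemma hs_norm_eq:
  fixes X :: "'a::complex_inner \<Rightarrow> 'a"
  assumes "E = (SOME E. onb E)" "is_adj X X'" "(\<lambda>e. (norm (X e))\<^sup>2) summable_on E"
  shows "hs_norm X = sqrt (infsum (\<lambda>e. (norm (X e))\<^sup>2) E)"
proof -
  have pw: "cinner e (X' (X e)) = complex_of_real ((norm (X e))\<^sup>2)" for e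
    using assms(2) unfolding is_adj_def by (metis cinner_self)
  have "trace (adj X \<circ> X) = infsum (\<lambda>e. complex_of_real ((norm (X e))\<^sup>2)) E"
    unfolding trace_def adj_unique[OF assms(2)] assms(1)[symmetric] comp_def pw ..
  also have "\<dots> = complex_of_real (infsum (\<lambda>e. (norm (X e))\<^sup>2) E)"
  proof (rule infsumI)
    show "((\<lambda>e. complex_of_real ((norm (X e))\<^sup>2)) has_sum complex_of_real (infsum (\<lambda>e. (norm (X e))\<^sup>2) E)) E"
      by (rule has_sum_of_real) (use assms(3) in simp)
  qed
  finally show ?thesis unfolding hs_norm_def by simp
qed

lemma ReOp_formula:
  fixes S :: "'a::complex_inner \<Rightarrow> 'a"
  assumes Edef: "E = (SOME E. onb E)" and E: "onb E" and adj: "is_adj S S'"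
    and sS: "(\<lambda>e. (norm (S e))\<^sup>2) summable_on E" and sS': "(\<lambda>e. (norm (S' e))\<^sup>2) summable_on E"
  shows "hs_norm (ReOp S) = sqrt ((infsum (\<lambda>e. (norm (S e))\<^sup>2) E + Re (trace (S \<circ> S))) / 2)
    \<and> 0 \<le> (infsum (\<lambda>e. (norm (S e))\<^sup>2) E + Re (trace (S \<circ> S))) / 2"
proof -
  define R where "R x = scaleC (1/2) (S x) + scaleC (1/2) (S' x)" for x
  have R: "ReOp S = R"
    unfolding ReOp_def R_def adj_unique[OF adj] by (simp add: scaleC_add_right)
  have adjR: "is_adj R R"
    unfolding is_adj_def R_def
  proof (intro allI)
    fix x y
    have 1: "cinner (S' x) y = cinner x (S y)"
      using is_adj_sym[OF adj] unfolding is_adj_def by simp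
    show "cinner (scaleC (1/2) (S x) + scaleC (1/2) (S' x)) y = cinner x (scaleC (1/2) (S y) + scaleC (1/2) (S' y))"
      using adj 1 unfolding is_adj_def
      by (simp add: cinner_add_left cinner_add_right cinner_scaleC_left cinner_scaleC_right)
  qed
  let ?N = "infsum (\<lambda>e. (norm (S e))\<^sup>2) E"
  have hR: "((\<lambda>e. (norm (R e))\<^sup>2) has_sum
      ((cmod (1/2))\<^sup>2 * ?N + (cmod (1/2))\<^sup>2 * infsum (\<lambda>e. (norm (S' e))\<^sup>2) E
        + 2 * Re (cnj (1/2) * (1/2) * infsum (\<lambda>e. cinner (S e) (S' e)) E))) E"
    unfolding R_def by (rule comb_has_sum[OF sS sS'])
  have NS': "infsum (\<lambda>e. (norm (S' e))\<^sup>2) E = ?N"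
    using hs_swap[OF E E adj sS] by (simp add: infsumI)
  have tr: "infsum (\<lambda>e. cinner (S e) (S' e)) E = cnj (trace (S \<circ> S))"
  proof -
    have "cinner (S e) (S' e) = cnj (cinner e (S (S e)))" for e
      using adj unfolding is_adj_def by (metis cinner_commute)
    then show ?thesis
      unfolding trace_def Edef[symmetric] by simp
  qed
  have "hs_norm (ReOp S) = sqrt (infsum (\<lambda>e. (norm (R e))\<^sup>2) E)"
    unfolding R by (rule hs_norm_eq[OF Edef adjR]) (use hR in \<open>rule has_sum_imp_summable\<close>)
  moreover have "infsum (\<lambda>e. (norm (R e))\<^sup>2) E = (?N + Re (trace (S \<circ> S))) / 2"
    using infsumI[OF hR] unfolding NS' tr by (simp add: power_divide)
  moreover have "0 \<le> infsum (\<lambda>e. (norm (R e))\<^sup>2) E"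
    by (rule infsum_nonneg) simp
  ultimately show ?thesis by simp
qed



lemma real_ineq:
  fixes x y \<alpha> \<beta> \<gamma> :: real
  assumes "0 \<le> x" "0 \<le> y" "x\<^sup>2 + y\<^sup>2 \<le> 1" "0 \<le> \<alpha>" "0 \<le> \<beta>" "0 \<le> \<gamma>"
  shows "x\<^sup>2 * \<alpha> + y\<^sup>2 * \<beta> + 2 * x * y * \<gamma> \<le> max \<alpha> \<beta> + \<gamma>"
proof -
  have "x\<^sup>2 * \<alpha> \<le> x\<^sup>2 * max \<alpha> \<beta>" by (intro mult_left_mono) auto
  moreover have "y\<^sup>2 * \<beta> \<le> y\<^sup>2 * max \<alpha> \<beta>" by (intro mult_left_mono) auto
  moreover have "(x\<^sup>2 + y\<^sup>2) * max \<alpha> \<beta> \<le> 1 * max \<alpha> \<beta>"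
    using assms by (intro mult_right_mono) auto
  moreover have "2 * x * y \<le> 1"
    using sum_squares_bound[of x y] assms(3) by linarith
  then have "2 * x * y * \<gamma> \<le> 1 * \<gamma>"
    using assms by (intro mult_right_mono) auto
  ultimately show ?thesis by (simp add: algebra_simps)
qed

lemma trace_term_summable:
  fixes X Y :: "'a::complex_inner \<Rightarrow> 'a"
  assumes "is_adj X X'" "(\<lambda>e. (norm (X' e))\<^sup>2) summable_on E" "(\<lambda>e. (norm (Y e))\<^sup>2) summable_on E"
  shows "(\<lambda>e. cinner e (X (Y e))) summable_on E"
proof -
  have "cinner (X' e) (Y e) = cinner e (X (Y e))" for e
    using is_adj_sym[OF assms(1)] unfolding is_adj_def by simp
  then show ?thesis using inner_summable[OF assms(2,3)] by simp
qed

theorem theorem3p4: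
  fixes B C :: "'a::chilbert_space \<Rightarrow> 'a"
  assumes "hilbert_schmidt B" and "hilbert_schmidt C"
  shows "(w2e B C)\<^sup>2 \<le> 1/2 * (max (cmod (trace (B \<circ> B))) (cmod (trace (C \<circ> C)))
            + cmod (trace (B \<circ> C))
            + max ((hs_norm B)\<^sup>2) ((hs_norm C)\<^sup>2)
            + cmod (trace (B \<circ> adj C)))"
proof -
  obtain E1 where Bl: "bounded_clinear_op B" and E1: "onb E1" "(\<lambda>e. (norm (B e))\<^sup>2) summable_on E1"
    using assms(1) unfolding hilbert_schmidt_def by blast
  obtain E2 where Cl: "bounded_clinear_op C" and E2: "onb E2" "(\<lambda>e. (norm (C e))\<^sup>2) summable_on E2"
    using assms(2) unfolding hilbert_schmidt_def by blast
  define E :: "'a set" where "E = (SOME E. onb E)"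
  have E: "onb E" unfolding E_def by (rule someI[of onb E1, OF E1(1)])
  obtain B' where aB: "is_adj B B'" using hs_adj_exists[OF Bl E1] by blast
  obtain C' where aC: "is_adj C C'" using hs_adj_exists[OF Cl E2] by blast
  have sB': "(\<lambda>e. (norm (B' e))\<^sup>2) summable_on E"
    using hs_swap[OF E1(1) E aB E1(2)] by (rule has_sum_imp_summable)
  have sB: "(\<lambda>e. (norm (B e))\<^sup>2) summable_on E"
    using hs_swap[OF E E is_adj_sym[OF aB] sB'] by (rule has_sum_imp_summable)
  have sC': "(\<lambda>e. (norm (C' e))\<^sup>2) summable_on E"
    using hs_swap[OF E2(1) E aC E2(2)] by (rule has_sum_imp_summable)
  have sC: "(\<lambda>e. (norm (C e))\<^sup>2) summable_on E"
    using hs_swap[OF E E is_adj_sym[OF aC] sC'] by (rule has_sum_imp_summable)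
  have Badd: "\<And>x y. B (x + y) = B x + B y" and Bsc: "\<And>c x. B (scaleC c x) = scaleC c (B x)"
    using Bl unfolding bounded_clinear_op_def by blast+
  have Cadd: "\<And>x y. C (x + y) = C x + C y" and Csc: "\<And>c x. C (scaleC c x) = scaleC c (C x)"
    using Cl unfolding bounded_clinear_op_def by blast+

  define nb where "nb = infsum (\<lambda>e. (norm (B e))\<^sup>2) E"
  define nc where "nc = infsum (\<lambda>e. (norm (C e))\<^sup>2) E"
  define P where "P = infsum (\<lambda>e. cinner (B e) (C e)) E"
  define tBB where "tBB = trace (B \<circ> B)"
  define tBC where "tBC = trace (B \<circ> C)"
  define tCC where "tCC = trace (C \<circ> C)"
  have nb0: "0 \<le> nb" unfolding nb_def by (rule infsum_nonneg) simp
  have nc0: "0 \<le> nc" unfolding nc_def by (rule infsum_nonneg) simp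
  have hB: "(hs_norm B)\<^sup>2 = nb"
    using hs_norm_eq[OF E_def aB sB] nb0 unfolding nb_def by simp
  have hC: "(hs_norm C)\<^sup>2 = nc"
    using hs_norm_eq[OF E_def aC sC] nc0 unfolding nc_def by simp
  have trBadjC: "trace (B \<circ> adj C) = cnj P"
  proof -
    have "trace (B \<circ> adj C) = infsum (\<lambda>e. cinner (B' e) (C' e)) E"
      unfolding trace_def E_def[symmetric] adj_unique[OF aC] comp_def
      using is_adj_sym[OF aB] unfolding is_adj_def by simp
    also have "\<dots> = infsum (\<lambda>f. cinner (C f) (B f)) E"
      by (rule hs_swap_polar[OF E E is_adj_sym[OF aB] is_adj_sym[OF aC] sB' sC'])
    also have "\<dots> = infsum (\<lambda>f. cnj (cinner (B f) (C f))) E"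
      by (rule infsum_cong) (rule cinner_commute)
    finally show ?thesis unfolding P_def by simp
  qed
  have tCB: "infsum (\<lambda>e. cinner e (C (B e))) E = tBC"
  proof -
    have "infsum (\<lambda>e. cinner e (C (B e))) E = infsum (\<lambda>e. cinner (C' e) (B e)) E"
      using is_adj_sym[OF aC] unfolding is_adj_def by simp
    also have "\<dots> = infsum (\<lambda>f. cinner (B' f) (C f)) E"
      by (rule hs_swap_polar[OF E E is_adj_sym[OF aC] aB sC' sB])
    also have "\<dots> = infsum (\<lambda>e. cinner e (B (C e))) E"
      using is_adj_sym[OF aB] unfolding is_adj_def by simp
    finally show ?thesis unfolding tBC_def trace_def E_def[symmetric] comp_def .
  qed

  define K where "K = 1/2 * (max (cmod tBB) (cmod tCC) + cmod tBC + max nb nc + cmod P)"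
  define A where "A = {hs_norm (ReOp (\<lambda>x. scaleC (exp (\<i> * complex_of_real \<theta>))
                      (scaleC l1 (B x) + scaleC l2 (C x))))
                 | l1 l2 \<theta>. (cmod l1)\<^sup>2 + (cmod l2)\<^sup>2 \<le> 1}"
  have key: "0 \<le> r \<and> r\<^sup>2 \<le> K" if "r \<in> A" for r
  proof -
    obtain l1 l2 \<theta> where r: "r = hs_norm (ReOp (\<lambda>x. scaleC (exp (\<i> * complex_of_real \<theta>))
                      (scaleC l1 (B x) + scaleC l2 (C x))))" and l: "(cmod l1)\<^sup>2 + (cmod l2)\<^sup>2 \<le> 1"
      using \<open>r \<in> A\<close> unfolding A_def by blast
    define u where "u = exp (\<i> * complex_of_real \<theta>)"
    have u1: "cmod u = 1" unfolding u_def by (simp add: norm_exp_eq_Re)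
    define a where "a = u * l1"
    define b where "b = u * l2"
    have ca: "cmod a = cmod l1" and cb: "cmod b = cmod l2"
      unfolding a_def b_def using u1 by (simp_all add: norm_mult)
    define S where "S x = scaleC a (B x) + scaleC b (C x)" for x
    define S' where "S' y = scaleC (cnj a) (B' y) + scaleC (cnj b) (C' y)" for y
    have Seq: "(\<lambda>x. scaleC (exp (\<i> * complex_of_real \<theta>)) (scaleC l1 (B x) + scaleC l2 (C x))) = S"
      unfolding S_def a_def b_def u_def by (simp add: scaleC_add_right scaleC_scaleC)
    have aS: "is_adj S S'"
      using aB aC unfolding is_adj_def S_def S'_def
      by (simp add: cinner_add_left cinner_add_right cinner_scaleC_left cinner_scaleC_right)
    have hS: "((\<lambda>e. (norm (S e))\<^sup>2) has_sum
        ((cmod a)\<^sup>2 * nb + (cmod b)\<^sup>2 * nc + 2 * Re (cnj a * b * P))) E"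
      unfolding S_def nb_def nc_def P_def by (rule comb_has_sum[OF sB sC])
    have sS': "(\<lambda>e. (norm (S' e))\<^sup>2) summable_on E"
      unfolding S'_def by (rule has_sum_imp_summable[OF comb_has_sum[OF sB' sC']])
    have RF: "r = sqrt ((infsum (\<lambda>e. (norm (S e))\<^sup>2) E + Re (trace (S \<circ> S))) / 2)
        \<and> 0 \<le> (infsum (\<lambda>e. (norm (S e))\<^sup>2) E + Re (trace (S \<circ> S))) / 2"
      unfolding r Seq by (rule ReOp_formula[OF E_def E aS has_sum_imp_summable[OF hS] sS'])
    have NS: "infsum (\<lambda>e. (norm (S e))\<^sup>2) E = (cmod a)\<^sup>2 * nb + (cmod b)\<^sup>2 * nc + 2 * Re (cnj a * b * P)"
      by (rule infsumI[OF hS])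
    have trS: "trace (S \<circ> S) = a * a * tBB + 2 * a * b * tBC + b * b * tCC"
    proof -
      have pw: "cinner e (S (S e)) = a * a * cinner e (B (B e)) + a * b * cinner e (B (C e))
                 + (b * a * cinner e (C (B e)) + b * b * cinner e (C (C e)))" for e
        unfolding S_def
        by (simp add: Badd Bsc Cadd Csc cinner_add_right cinner_scaleC_right algebra_simps)
      have s1: "(\<lambda>e. cinner e (B (B e))) summable_on E" by (rule trace_term_summable[OF aB sB' sB])
      have s2: "(\<lambda>e. cinner e (B (C e))) summable_on E" by (rule trace_term_summable[OF aB sB' sC])
      have s3: "(\<lambda>e. cinner e (C (B e))) summable_on E" by (rule trace_term_summable[OF aC sC' sB])
      have s4: "(\<lambda>e. cinner e (C (C e))) summable_on E" by (rule trace_term_summable[OF aC sC' sC])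
      have "trace (S \<circ> S) = infsum (\<lambda>e. a * a * cinner e (B (B e)) + a * b * cinner e (B (C e))
                 + (b * a * cinner e (C (B e)) + b * b * cinner e (C (C e)))) E"
        unfolding trace_def E_def[symmetric] comp_def pw ..
      also have "\<dots> = a * a * infsum (\<lambda>e. cinner e (B (B e))) E + a * b * infsum (\<lambda>e. cinner e (B (C e))) E
                 + (b * a * infsum (\<lambda>e. cinner e (C (B e))) E + b * b * infsum (\<lambda>e. cinner e (C (C e))) E)"
        using s1 s2 s3 s4
        by (simp add: infsum_add summable_on_add summable_on_cmult_right infsum_cmult_right')
      finally show ?thesis
        unfolding tCB tBB_def tBC_def tCC_def trace_def E_def[symmetric] comp_def
        by (simp add: algebra_simps)
    qed
    have x0: "0 \<le> cmod l1" and y0: "0 \<le> cmod l2" by simp_all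
    have b1: "infsum (\<lambda>e. (norm (S e))\<^sup>2) E \<le> max nb nc + cmod P"
    proof -
      have "Re (cnj a * b * P) \<le> cmod l1 * cmod l2 * cmod P"
        using complex_Re_le_cmod[of "cnj a * b * P"] by (simp add: norm_mult ca cb)
      then have "infsum (\<lambda>e. (norm (S e))\<^sup>2) E \<le> (cmod l1)\<^sup>2 * nb + (cmod l2)\<^sup>2 * nc + 2 * cmod l1 * cmod l2 * cmod P"
        unfolding NS ca cb by simp
      also have "\<dots> \<le> max nb nc + cmod P"
        by (rule real_ineq[OF x0 y0 l nb0 nc0]) simp
      finally show ?thesis .
    qed
    have b2: "Re (trace (S \<circ> S)) \<le> max (cmod tBB) (cmod tCC) + cmod tBC"
    proof -
      have "Re (trace (S \<circ> S)) \<le> cmod (trace (S \<circ> S))" by (rule complex_Re_le_cmod)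
      also have "\<dots> \<le> cmod (a * a * tBB) + cmod (2 * a * b * tBC) + cmod (b * b * tCC)"
        unfolding trS
        by (rule order_trans[OF norm_triangle_ineq add_right_mono[OF norm_triangle_ineq]])
      also have "\<dots> = (cmod l1)\<^sup>2 * cmod tBB + (cmod l2)\<^sup>2 * cmod tCC + 2 * cmod l1 * cmod l2 * cmod tBC"
        by (simp add: norm_mult ca cb power2_eq_square)
      also have "\<dots> \<le> max (cmod tBB) (cmod tCC) + cmod tBC"
        by (rule real_ineq[OF x0 y0 l]) simp_all
      finally show ?thesis .
    qed
    have "r\<^sup>2 = (infsum (\<lambda>e. (norm (S e))\<^sup>2) E + Re (trace (S \<circ> S))) / 2"
      using RF by simp
    also have "\<dots> \<le> K"
      unfolding K_def using b1 b2 by simp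
    finally show ?thesis using RF by simp
  qed
  have ne: "A \<noteq> {}"
  proof -
    have "hs_norm (ReOp (\<lambda>x. scaleC (exp (\<i> * complex_of_real 0)) (scaleC 0 (B x) + scaleC 0 (C x)))) \<in> A"
      unfolding A_def by (rule CollectI, intro exI[of _ 0]) simp
    then show ?thesis by blast
  qed
  obtain r0 where "r0 \<in> A" using ne by blast
  have K0: "0 \<le> K" using key[OF \<open>r0 \<in> A\<close>] zero_le_power2[of r0] by linarith
  have le: "r \<le> sqrt K" if "r \<in> A" for r
    using key[OF that] by (intro real_le_rsqrt) simp
  have bdd: "bdd_above A" using le by (intro bdd_aboveI)
  have sup_le: "Sup A \<le> sqrt K" by (rule cSup_least[OF ne le])
  have sup0: "0 \<le> Sup A"
    using key[OF \<open>r0 \<in> A\<close>] cSup_upper[OF \<open>r0 \<in> A\<close> bdd] by linarith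
  have "(Sup A)\<^sup>2 \<le> (sqrt K)\<^sup>2"
    using sup_le sup0 by (intro power_mono) auto
  also have "\<dots> = K" using K0 by simp
  finally have "(Sup A)\<^sup>2 \<le> K" .
  moreover have "w2e B C = Sup A" unfolding w2e_def A_def ..
  ultimately show ?thesis
    unfolding K_def hB hC trBadjC tBB_def tBC_def tCC_def by simp
qed


end
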